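(* Let $P$ be the $N\times N$ transition matrix of an irreducible aperiodic Markov chain on $\{1,\dots,N\}$, acting on row vectors by $v\mapsto vP$, with stationary distribution $\pi$. Fix a real canonical Jordan basis $(w_i)_{i=1}^N$ with $w_N=\pi$, and define $\lambda_i$, $r_i$, $\Pi_{\mu,r}$ as in the context. Let $\mu_0=\max\{|\lambda_i|: i<N\}$ and $r_0=\max\{r_i: i<N,\ |\lambda_i|=\mu_0\}$, and suppose $\mu_0>0$ and the image of $\Pi_{\mu_0,r_0}$ is one-dimensional. Fix a norm $|\cdot|$ on this image and put $q_i=|\Pi_{\mu_0,r_0}e_i|$, where $e_i$ is the $i$-th coordinate vector. Suppose $\sigma$ is a permutation of $\{1,\dots,N\}$ with $q_{\sigma_1}<\dots<q_{\sigma_N}$. Then for every norm $H$ on $\mathbb{R}^N$ there is $n_0=n_0(H)$ such that for all $n>n_0$, \[ H(e_{\sigma_1}P^n-\pi)<H(e_{\sigma_2}P^n-\pi)<\dots<H(e_{\sigma_N}P^n-\pi). \]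
   Context: Since $P$ is irreducible and aperiodic, $1$ is a simple eigenvalue with positive left eigenvector $\pi$ and all other eigenvalues have modulus $<1$. For $i<N$, $\lambda_i$ is the eigenvalue (chosen with $\operatorname{Im}\lambda_i\ge0$) of the real generalized eigenspace containing $w_i$. If $\lambda_i$ is real, $r_i=\min\{r\in\mathbb{N}: w_i(P-\lambda_iI)^r=0\}$; for nonreal eigenvalues basis vectors come in pairs $(w_i,w_j)$ (real and imaginary parts of a complex generalized eigenvector) and $r_i=r_j$ is the least $r$ with $(w_i+\mathrm{i}w_j)(P-\lambda I)^r=0$. $\Pi_{\mu,r}$ is the linear projection onto the span of $\{w_i:|\lambda_i|=\mu,\ r_i=r\}$ along the span of the other basis vectors. *)

theory Defs
  imports "HOL-Analysis.Analysis"
begin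

definition matpow :: "('a::semiring_1)^'n^'n \<Rightarrow> nat \<Rightarrow> 'a^'n^'n" where
  "matpow A n = ((\<lambda>B. B ** A) ^^ n) (mat 1)"

definition stochastic :: "real^'n^'n \<Rightarrow> bool" where
  "stochastic P \<longleftrightarrow> (\<forall>i j. 0 \<le> P $ i $ j) \<and> (\<forall>i. (\<Sum>j\<in>UNIV. P $ i $ j) = 1)"

definition irreducible_mc :: "real^'n^'n \<Rightarrow> bool" where
  "irreducible_mc P \<longleftrightarrow> (\<forall>i j. \<exists>n>0. 0 < matpow P n $ i $ j)"

definition period_mc :: "real^'n^'n \<Rightarrow> 'n \<Rightarrow> nat" where
  "period_mc P i = Gcd {n. 0 < n \<and> 0 < matpow P n $ i $ i}"

definition aperiodic_mc :: "real^'n^'n \<Rightarrow> bool" where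
  "aperiodic_mc P \<longleftrightarrow> (\<forall>i. period_mc P i = 1)"

definition stationary_dist :: "real^'n^'n \<Rightarrow> real^'n \<Rightarrow> bool" where
  "stationary_dist P \<pi> \<longleftrightarrow> \<pi> v* P = \<pi> \<and> (\<forall>i. 0 \<le> \<pi> $ i) \<and> (\<Sum>i\<in>UNIV. \<pi> $ i) = 1"

definition cvec :: "real^'n \<Rightarrow> complex^'n" where
  "cvec v = (\<chi> i. complex_of_real (v $ i))"

definition cmat :: "real^'n^'n \<Rightarrow> complex^'n^'n" where
  "cmat P = (\<chi> i j. complex_of_real (P $ i $ j))"

text \<open>A Jordan block is given by its eigenvalue l (with Im l \<ge> 0) and its length m.
  A real eigenvalue block occupies m consecutive basis indices, a nonreal one
  occupies 2m indices (consecutive pairs = real and imaginary parts).\<close>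

definition blk_size :: "complex \<times> nat \<Rightarrow> nat" where
  "blk_size b = (if Im (fst b) = 0 then snd b else 2 * snd b)"

definition blk_start :: "(complex \<times> nat) list \<Rightarrow> nat \<Rightarrow> nat" where
  "blk_start bs k = 1 + sum_list (map blk_size (take k bs))"

definition chain_vec :: "(nat \<Rightarrow> real^'n) \<Rightarrow> (complex \<times> nat) list \<Rightarrow> nat \<Rightarrow> nat \<Rightarrow> complex^'n" where
  "chain_vec w bs k t =
     (let s = blk_start bs k in
      if Im (fst (bs ! k)) = 0 then cvec (w (s + t))
      else cvec (w (s + 2 * t)) + \<i> *s cvec (w (s + 2 * t + 1)))"

definition real_jordan_basis ::
  "real^'n^'n \<Rightarrow> (nat \<Rightarrow> real^'n) \<Rightarrow> (complex \<times> nat) list \<Rightarrow> bool" where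
  "real_jordan_basis P w bs \<longleftrightarrow>
     inj_on w {1..CARD('n)} \<and> independent (w ` {1..CARD('n)}) \<and>
     span (w ` {1..CARD('n)}) = UNIV \<and>
     sum_list (map blk_size bs) = CARD('n) \<and>
     (\<forall>k<length bs. 0 < snd (bs ! k) \<and> 0 \<le> Im (fst (bs ! k)) \<and>
        (\<forall>t<snd (bs ! k).
           chain_vec w bs k t v* cmat P =
             fst (bs ! k) *s chain_vec w bs k t
             + (if t = 0 then 0 else chain_vec w bs k (t - 1))))"

definition blk_of :: "(complex \<times> nat) list \<Rightarrow> nat \<Rightarrow> nat" where
  "blk_of bs i = (THE k. k < length bs \<and> blk_start bs k \<le> i \<and> i < blk_start bs (Suc k))"

definition jlam :: "(complex \<times> nat) list \<Rightarrow> nat \<Rightarrow> complex" where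
  "jlam bs i = fst (bs ! blk_of bs i)"

text \<open>the complex generalized eigenvector associated with w_i: w_i itself if lambda_i is
  real, and w_i + i w_j (resp. w_j + i w_i) for the pair (w_i, w_j) otherwise\<close>
definition jvec :: "(nat \<Rightarrow> real^'n) \<Rightarrow> (complex \<times> nat) list \<Rightarrow> nat \<Rightarrow> complex^'n" where
  "jvec w bs i =
     (let k = blk_of bs i; s = blk_start bs k in
      if Im (fst (bs ! k)) = 0 then cvec (w i)
      else chain_vec w bs k ((i - s) div 2))"

definition jrank :: "real^'n^'n \<Rightarrow> (nat \<Rightarrow> real^'n) \<Rightarrow> (complex \<times> nat) list \<Rightarrow> nat \<Rightarrow> nat" where
  "jrank P w bs i = (LEAST r. jvec w bs i v* matpow (cmat P - mat (jlam bs i)) r = 0)"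

definition bcoord :: "(nat \<Rightarrow> real^'n) \<Rightarrow> real^'n \<Rightarrow> nat \<Rightarrow> real" where
  "bcoord w v = (THE c. (\<forall>i. i \<notin> {1..CARD('n)} \<longrightarrow> c i = 0) \<and>
                        v = (\<Sum>i\<in>{1..CARD('n)}. c i *\<^sub>R w i))"

definition bproj :: "(nat \<Rightarrow> real^'n) \<Rightarrow> nat set \<Rightarrow> real^'n \<Rightarrow> real^'n" where
  "bproj w S v = (\<Sum>i\<in>S \<inter> {1..CARD('n)}. bcoord w v i *\<^sub>R w i)"

definition Pi_proj :: "real^'n^'n \<Rightarrow> (nat \<Rightarrow> real^'n) \<Rightarrow> (complex \<times> nat) list
                       \<Rightarrow> real \<Rightarrow> nat \<Rightarrow> real^'n \<Rightarrow> real^'n" where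
  "Pi_proj P w bs \<mu> r = bproj w {i \<in> {1..CARD('n)}. cmod (jlam bs i) = \<mu> \<and> jrank P w bs i = r}"

definition norm_on :: "(real^'n) set \<Rightarrow> (real^'n \<Rightarrow> real) \<Rightarrow> bool" where
  "norm_on V f \<longleftrightarrow>
     (\<forall>x\<in>V. 0 \<le> f x \<and> (f x = 0 \<longleftrightarrow> x = 0)) \<and>
     (\<forall>x\<in>V. \<forall>a. f (a *\<^sub>R x) = \<bar>a\<bar> * f x) \<and>
     (\<forall>x\<in>V. \<forall>y\<in>V. f (x + y) \<le> f x + f y)"

end

theory Submission
  imports Defs "HOL-Real_Asymp.Real_Asymp"
begin


lemma matpow_0[simp]: "matpow A 0 = mat 1"
  by (simp add: matpow_def)
lemma matpow_Suc: "matpow A (Suc n) = matpow A n ** A"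
  by (simp add: matpow_def)
lemma matpow_add: "matpow A (a + b) = matpow A a ** matpow A b"
  by (induction b) (simp_all add: matpow_Suc matrix_mul_assoc)
lemma matpow_Suc2: "matpow A (Suc n) = A ** matpow A n"
  using matpow_add[of A 1 n] by (simp add: matpow_Suc)

lemma vm_minus: "(x::'a::comm_ring_1^'n) v* (A - B) = x v* A - x v* B"
  by (simp add: vector_matrix_mult_def vec_eq_iff algebra_simps sum_subtractf)
lemma vm_plus: "(x::'a::comm_ring_1^'n) v* (A + B) = x v* A + x v* B"
  by (simp add: vector_matrix_mult_def vec_eq_iff algebra_simps sum.distrib)
lemma vm_mat: "(x::'a::comm_ring_1^'n) v* mat c = c *s x"
proof -
  have "(\<Sum>i\<in>UNIV. x $ i * (if i = j then c else 0)) = c * x $ j" for j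
  proof -
    have "(\<Sum>i\<in>UNIV. x $ i * (if i = j then c else 0)) = (\<Sum>i\<in>UNIV. if i = j then c * x $ i else 0)"
      by (intro sum.cong) auto
    then show ?thesis by simp
  qed
  then show ?thesis by (simp add: vector_matrix_mult_def vec_eq_iff mat_def)
qed
lemma vm_add_left: "((x::'a::comm_ring_1^'n) + y) v* A = x v* A + y v* A"
  by (simp add: vector_matrix_mult_def vec_eq_iff algebra_simps sum.distrib)
lemma vm_diff_left: "((x::'a::comm_ring_1^'n) - y) v* A = x v* A - y v* A"
  by (simp add: vector_matrix_mult_def vec_eq_iff algebra_simps sum_subtractf)
lemma vm_scale_left: "(c *s (x::'a::comm_ring_1^'n)) v* A = c *s (x v* A)"
  by (simp add: vector_matrix_mult_def vec_eq_iff algebra_simps sum_distrib_left)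
lemma vm_sum_left: "(\<Sum>i\<in>S. f i :: 'a::comm_ring_1^'n) v* A = (\<Sum>i\<in>S. f i v* A)"
  by (induction S rule: infinite_finite_induct) (simp_all add: vm_add_left)
lemma vm_smult_left: "(c *\<^sub>R (x::real^'n)) v* A = c *\<^sub>R (x v* A)"
  using vm_scale_left[of c x A] by (simp add: scalar_mult_eq_scaleR)

lemma binom_coeff_step:
  fixes l :: "'a::comm_ring_1"
  shows "of_nat (Suc n choose k) * l^(Suc n - k) =
         l * (of_nat (n choose k) * l^(n-k)) + (if k = 0 then 0 else of_nat (n choose (k-1)) * l^(n-(k-1)))"
proof (cases k)
  case 0 then show ?thesis by simp
next
  case (Suc j)
  show ?thesis
  proof (cases "j < n")
    case True
    then have "l * l^(n - Suc j) = l^(n-j)"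
      by (metis Suc_diff_Suc power_Suc)
    then have "of_nat (n choose Suc j) * l ^ (n - j) = l * (of_nat (n choose Suc j) * l ^ (n - Suc j))"
      by (metis mult.left_commute)
    then show ?thesis using Suc by (simp add: algebra_simps)
  next
    case False
    then show ?thesis using Suc by (simp add: binomial_eq_0)
  qed
qed

lemma binom_expand:
  fixes x :: "'a::comm_ring_1^'n" and A :: "'a^'n^'n"
  assumes z: "x v* matpow (A - mat l) r = 0"
  shows "x v* matpow A n = (\<Sum>k<r. (of_nat (n choose k) * l^(n-k)) *s (x v* matpow (A - mat l) k))"
proof (induction n)
  case 0
  show ?case
  proof (cases r)
    case 0 then show ?thesis using z by simp
  next
    case (Suc r')
    have "(\<Sum>k<r. (of_nat (0 choose k) * l^(0-k)) *s (x v* matpow (A - mat l) k))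
        = (\<Sum>k<r. if k = 0 then x else 0)"
      by (intro sum.cong) (auto simp: vec_eq_iff binomial_eq_0)
    also have "\<dots> = x" using Suc by simp
    finally show ?thesis by simp
  qed
next
  case (Suc n)
  define B where "B = A - mat l"
  define v where "v k = x v* matpow B k" for k
  define a where "a n k = (of_nat (n choose k) * l^(n-k) :: 'a)" for n k
  have vS: "v k v* A = v (Suc k) + l *s v k" for k
  proof -
    have "A = B + mat l" by (simp add: B_def)
    then have "v k v* A = v k v* B + v k v* mat l" by (metis vm_plus)
    then show ?thesis by (simp add: v_def vm_mat vector_matrix_mul_assoc matpow_Suc)
  qed
  have vr: "v r = 0" using z by (simp add: v_def B_def)
  have IH: "x v* matpow A n = (\<Sum>k<r. a n k *s v k)" using Suc by (simp add: a_def v_def B_def)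
  have "x v* matpow A (Suc n) = (x v* matpow A n) v* A"
    by (simp add: matpow_Suc vector_matrix_mul_assoc)
  also have "\<dots> = (\<Sum>k<r. a n k *s (v k v* A))" unfolding IH
    by (simp add: vm_sum_left vm_scale_left)
  also have "\<dots> = (\<Sum>k<r. a n k *s v (Suc k)) + (\<Sum>k<r. (l * a n k) *s v k)"
    by (simp add: vS vector_sadd_rdistrib sum.distrib scalar_mult_eq_scaleR algebra_simps vec_eq_iff)
  also have "(\<Sum>k<r. a n k *s v (Suc k)) = (\<Sum>k<r. (if k = 0 then 0 else a n (k-1)) *s v k)"
  proof -
    define g where "g k = (if k = 0 then 0 else a n (k-1)) *s v k" for k
    have "(\<Sum>k<Suc r. g k) = g 0 + (\<Sum>k<r. g (Suc k))" by (rule sum.lessThan_Suc_shift)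
    moreover have "(\<Sum>k<Suc r. g k) = (\<Sum>k<r. g k)" using vr by (simp add: g_def)
    ultimately show ?thesis by (simp add: g_def)
  qed
  also have "(\<Sum>k<r. (if k = 0 then 0 else a n (k-1)) *s v k) + (\<Sum>k<r. (l * a n k) *s v k)
      = (\<Sum>k<r. a (Suc n) k *s v k)"
    unfolding sum.distrib[symmetric]
    by (intro sum.cong refl) (simp add: a_def binom_coeff_step[of n] vec_eq_iff algebra_simps)
  finally show ?case by (simp add: a_def v_def B_def)
qed


lemma indep_zero:
  fixes P :: "real^'n^'n" and w :: "nat \<Rightarrow> real^'n"
  assumes rjb: "real_jordan_basis P w bs" and T: "T \<subseteq> {1..CARD('n)}"
    and s: "(\<Sum>i\<in>T. c i *\<^sub>R w i) = (0::real^'n)" and i: "i \<in> T"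
  shows "c i = 0"
proof (rule ccontr)
  assume ci: "c i \<noteq> 0"
  have inj: "inj_on w T" using rjb T unfolding real_jordan_basis_def by (auto intro: inj_on_subset)
  have ind: "independent (w ` T)" using rjb T unfolding real_jordan_basis_def
    by (metis independent_mono image_mono)
  have fin: "finite (w ` T)" using T by (auto intro: finite_subset)
  define u where "u v = c (inv_into T w v)" for v
  have "(\<Sum>v\<in>w ` T. u v *\<^sub>R v) = (\<Sum>i\<in>T. u (w i) *\<^sub>R w i)"
    by (rule sum.reindex[OF inj, unfolded comp_def])
  also have "\<dots> = (\<Sum>i\<in>T. c i *\<^sub>R w i)"
    by (intro sum.cong refl) (simp add: u_def inv_into_f_f[OF inj])
  finally have "(\<Sum>v\<in>w ` T. u v *\<^sub>R v) = 0" using s by simp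
  moreover have "u (w i) \<noteq> 0" using ci i by (simp add: u_def inv_into_f_f[OF inj])
  ultimately have "dependent (w ` T)" using i fin by (auto simp: dependent_finite)
  then show False using ind by simp
qed

lemma rep_exists:
  fixes P :: "real^'n^'n" and w :: "nat \<Rightarrow> real^'n"
  assumes rjb: "real_jordan_basis P w bs"
  shows "\<exists>c. (\<forall>i. i \<notin> {1..CARD('n)} \<longrightarrow> c i = 0) \<and> v = (\<Sum>i\<in>{1..CARD('n)}. c i *\<^sub>R w i)"
proof -
  let ?I = "{1..CARD('n)}"
  have inj: "inj_on w ?I" using rjb unfolding real_jordan_basis_def by auto
  have "v \<in> span (w ` ?I)" using rjb unfolding real_jordan_basis_def by auto
  then obtain u where u: "v = (\<Sum>x\<in>w ` ?I. u x *\<^sub>R x)"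
    using span_finite[of "w ` ?I"] by auto
  also have "\<dots> = (\<Sum>i\<in>?I. u (w i) *\<^sub>R w i)"
    by (rule sum.reindex[OF inj, unfolded comp_def])
  finally have "v = (\<Sum>i\<in>?I. (if i \<in> ?I then u (w i) else 0) *\<^sub>R w i)" by simp
  then show ?thesis by (intro exI[of _ "\<lambda>i. if i \<in> ?I then u (w i) else 0"]) auto
qed

lemma bcoord_unique:
  fixes P :: "real^'n^'n" and w :: "nat \<Rightarrow> real^'n"
  assumes rjb: "real_jordan_basis P w bs"
    and z: "\<forall>i. i \<notin> {1..CARD('n)} \<longrightarrow> c i = 0" and v: "v = (\<Sum>i\<in>{1..CARD('n)}. c i *\<^sub>R w i)"
  shows "bcoord w v = c"
  unfolding bcoord_def
proof (rule the_equality)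
  show "(\<forall>i. i \<notin> {1..CARD('n)} \<longrightarrow> c i = 0) \<and> v = (\<Sum>i\<in>{1..CARD('n)}. c i *\<^sub>R w i)" using z v by blast
next
  fix d assume d: "(\<forall>i. i \<notin> {1..CARD('n)} \<longrightarrow> d i = 0) \<and> v = (\<Sum>i\<in>{1..CARD('n)}. d i *\<^sub>R w i)"
  have "(\<Sum>i\<in>{1..CARD('n)}. (d i - c i) *\<^sub>R w i) = 0"
    using d v by (simp add: scaleR_diff_left sum_subtractf)
  then have "d i - c i = 0" if "i \<in> {1..CARD('n)}" for i
    using indep_zero[OF rjb order_refl, of "\<lambda>i. d i - c i"] that by blast
  then show "d = c" using d z by (metis eq_iff_diff_eq_0 ext)
qed

lemma bcoord_rep:
  fixes P :: "real^'n^'n" and w :: "nat \<Rightarrow> real^'n"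
  assumes rjb: "real_jordan_basis P w bs"
  shows "v = (\<Sum>i\<in>{1..CARD('n)}. bcoord w v i *\<^sub>R w i)"
    and "\<forall>i. i \<notin> {1..CARD('n)} \<longrightarrow> bcoord w v i = 0"
  using rep_exists[OF rjb, of v] bcoord_unique[OF rjb] by metis+

lemma bcoord_basis:
  fixes P :: "real^'n^'n" and w :: "nat \<Rightarrow> real^'n"
  assumes rjb: "real_jordan_basis P w bs" and m: "m \<in> {1..CARD('n)}"
  shows "bcoord w (w m) = (\<lambda>i. if i = m then 1 else 0)"
proof (rule bcoord_unique[OF rjb])
  have "(\<Sum>i\<in>{1..CARD('n)}. (if i = m then 1 else 0) *\<^sub>R w i) = (\<Sum>i\<in>{1..CARD('n)}. if i = m then w i else 0)"
    by (intro sum.cong) auto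
  then show "w m = (\<Sum>i\<in>{1..CARD('n)}. (if i = m then 1 else 0) *\<^sub>R w i)" using m by simp
qed (use m in auto)

lemma range_bproj:
  fixes P :: "real^'n^'n" and w :: "nat \<Rightarrow> real^'n"
  assumes rjb: "real_jordan_basis P w bs" and S: "S \<subseteq> {1..CARD('n)}"
  shows "range (bproj w S) = span (w ` S)"
proof
  show "range (bproj w S) \<subseteq> span (w ` S)"
    unfolding bproj_def by (intro image_subsetI span_sum span_scale span_base) auto
next
  show "span (w ` S) \<subseteq> range (bproj w S)"
  proof
    fix x assume "x \<in> span (w ` S)"
    then obtain u where u: "x = (\<Sum>y\<in>w ` S. u y *\<^sub>R y)"
      using span_finite[of "w ` S"] S by (auto intro: finite_subset)
    have inj: "inj_on w S" using rjb S unfolding real_jordan_basis_def by (auto intro: inj_on_subset)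
    have x: "x = (\<Sum>i\<in>S. u (w i) *\<^sub>R w i)" using u sum.reindex[OF inj, unfolded comp_def] by simp
    define c where "c i = (if i \<in> S then u (w i) else 0)" for i
    have "x = (\<Sum>i\<in>{1..CARD('n)}. c i *\<^sub>R w i)"
      unfolding x c_def using S by (intro sum.mono_neutral_cong_left) auto
    then have bc: "bcoord w x = c" using S by (intro bcoord_unique[OF rjb]) (auto simp: c_def)
    have "bproj w S x = (\<Sum>i\<in>S \<inter> {1..CARD('n)}. c i *\<^sub>R w i)" unfolding bproj_def bc ..
    also have "\<dots> = x" unfolding x c_def using S
      by (intro sum.cong) (auto simp: Int_absorb2)
    finally have "bproj w S x = x" .
    then show "x \<in> range (bproj w S)" by (metis rangeI)
  qed
qed

lemma dim_bproj:
  fixes P :: "real^'n^'n" and w :: "nat \<Rightarrow> real^'n"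
  assumes rjb: "real_jordan_basis P w bs" and S: "S \<subseteq> {1..CARD('n)}"
  shows "dim (range (bproj w S)) = card S"
proof -
  have inj: "inj_on w S" using rjb S unfolding real_jordan_basis_def by (auto intro: inj_on_subset)
  have ind: "independent (w ` S)" using rjb S unfolding real_jordan_basis_def
    by (metis independent_mono image_mono)
  show ?thesis unfolding range_bproj[OF rjb S] dim_span_eq_card_independent[OF ind] card_image[OF inj] ..
qed


lemma blk_start_0[simp]: "blk_start bs 0 = 1"
  by (simp add: blk_start_def)

lemma blk_start_Suc: "k < length bs \<Longrightarrow> blk_start bs (Suc k) = blk_start bs k + blk_size (bs ! k)"
  by (simp add: blk_start_def take_Suc_conv_app_nth)

lemma blk_start_ge: "k \<ge> length bs \<Longrightarrow> blk_start bs k = 1 + sum_list (map blk_size bs)"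
  by (simp add: blk_start_def)

lemma blk_start_mono: "k \<le> k' \<Longrightarrow> blk_start bs k \<le> blk_start bs k'"
proof (induction k' arbitrary: k)
  case 0 then show ?case by simp
next
  case (Suc k')
  have step: "blk_start bs k' \<le> blk_start bs (Suc k')"
    by (cases "k' < length bs") (simp_all add: blk_start_Suc blk_start_ge)
  show ?case
  proof (cases "k = Suc k'")
    case False then show ?thesis using Suc step by (meson le_SucE order_trans)
  qed simp
qed

lemma blk_start_le_total: "blk_start bs k \<le> 1 + sum_list (map blk_size bs)"
proof -
  have "blk_start bs k \<le> blk_start bs (max k (length bs))" by (rule blk_start_mono) simp
  then show ?thesis by (simp add: blk_start_ge)
qed

lemma blk_start_pos: "1 \<le> blk_start bs k"
  by (simp add: blk_start_def)

context
  fixes P :: "real^'n^'n" and w :: "nat \<Rightarrow> real^'n" and bs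
  assumes rjb: "real_jordan_basis P w bs"
begin

lemma rjb_total: "sum_list (map blk_size bs) = CARD('n)"
  using rjb by (simp add: real_jordan_basis_def)

lemma rjb_blk: "k < length bs \<Longrightarrow> 0 < snd (bs ! k) \<and> 0 \<le> Im (fst (bs ! k)) \<and>
        (\<forall>t<snd (bs ! k).
           chain_vec w bs k t v* cmat P =
             fst (bs ! k) *s chain_vec w bs k t
             + (if t = 0 then 0 else chain_vec w bs k (t - 1)))"
  using rjb by (simp add: real_jordan_basis_def)

lemma blk_start_Suc_le: "blk_start bs k \<le> CARD('n) + 1"
  using blk_start_le_total[of bs k] rjb_total by simp

lemma blk_of_eq:
  assumes k: "k < length bs" and i: "blk_start bs k \<le> i" "i < blk_start bs (Suc k)"
  shows "blk_of bs i = k"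
  unfolding blk_of_def
proof (rule the_equality)
  show "k < length bs \<and> blk_start bs k \<le> i \<and> i < blk_start bs (Suc k)" using k i by simp
next
  fix k' assume k': "k' < length bs \<and> blk_start bs k' \<le> i \<and> i < blk_start bs (Suc k')"
  show "k' = k"
  proof (rule ccontr)
    assume "k' \<noteq> k"
    then consider "k' < k" | "k < k'" by linarith
    then show False
    proof cases
      case 1
      then have "blk_start bs (Suc k') \<le> blk_start bs k" by (intro blk_start_mono) simp
      then show False using k' i by simp
    next
      case 2
      then have "blk_start bs (Suc k) \<le> blk_start bs k'" by (intro blk_start_mono) simp
      then show False using k' i by simp
    qed
  qed
qed

lemma blk_of_props:
  assumes i: "i \<in> {1..CARD('n)}"
  shows "blk_of bs i < length bs \<and> blk_start bs (blk_of bs i) \<le> i \<and> i < blk_start bs (Suc (blk_of bs i))"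
proof -
  define K where "K = {k. k \<le> length bs \<and> blk_start bs k \<le> i}"
  have finK: "finite K" unfolding K_def by simp
  have "0 \<in> K" using i by (simp add: K_def)
  define k0 where "k0 = Max K"
  have k0K: "k0 \<in> K" unfolding k0_def using finK \<open>0 \<in> K\<close> by (intro Max_in) auto
  have "k0 \<noteq> length bs"
  proof
    assume "k0 = length bs"
    then have "blk_start bs k0 = CARD('n) + 1" using blk_start_ge[of bs k0] rjb_total by simp
    then show False using k0K i by (simp add: K_def)
  qed
  then have k0l: "k0 < length bs" using k0K by (simp add: K_def)
  have "i < blk_start bs (Suc k0)"
  proof (rule ccontr)
    assume "\<not> ?thesis"
    then have "Suc k0 \<in> K" using k0l by (simp add: K_def)
    then have "Suc k0 \<le> k0" unfolding k0_def using finK by (intro Max_ge) auto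
    then show False by simp
  qed
  then have "k0 < length bs \<and> blk_start bs k0 \<le> i \<and> i < blk_start bs (Suc k0)"
    using k0l k0K by (simp add: K_def)
  then show ?thesis using blk_of_eq by metis
qed

lemma blk_size_bound:
  assumes k: "k < length bs"
  shows "blk_start bs (Suc k) = blk_start bs k + (if Im (fst (bs!k)) = 0 then snd (bs!k) else 2 * snd (bs!k))"
  using blk_start_Suc[OF k] by (simp add: blk_size_def)

lemma jvec_chain:
  assumes i: "i \<in> {1..CARD('n)}"
  shows "\<exists>t < snd (bs ! blk_of bs i). jvec w bs i = chain_vec w bs (blk_of bs i) t"
proof -
  define k where "k = blk_of bs i"
  define s where "s = blk_start bs k"
  have props: "k < length bs" "s \<le> i" "i < blk_start bs (Suc k)"
    using blk_of_props[OF i] by (simp_all add: k_def s_def)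
  show ?thesis
  proof (cases "Im (fst (bs ! k)) = 0")
    case True
    have "i - s < snd (bs ! k)" using props blk_size_bound[OF props(1)] True by (simp add: s_def)
    moreover have "jvec w bs i = chain_vec w bs k (i - s)"
      using True props by (simp add: jvec_def chain_vec_def Let_def k_def[symmetric] s_def)
    ultimately show ?thesis unfolding k_def by blast
  next
    case False
    have "(i - s) div 2 < snd (bs ! k)" using props blk_size_bound[OF props(1)] False by (simp add: s_def)
    moreover have "jvec w bs i = chain_vec w bs k ((i - s) div 2)"
      using False props by (simp add: jvec_def Let_def k_def[symmetric] s_def)
    ultimately show ?thesis unfolding k_def by blast
  qed
qed

lemma chain_step:
  assumes k: "k < length bs" and t: "t < snd (bs ! k)"
  shows "chain_vec w bs k t v* (cmat P - mat (fst (bs ! k))) = (if t = 0 then 0 else chain_vec w bs k (t - 1))"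
  using rjb_blk[OF k] t by (simp add: vm_minus vm_mat)

lemma chain_nil:
  assumes k: "k < length bs"
  shows "t < snd (bs ! k) \<Longrightarrow> chain_vec w bs k t v* matpow (cmat P - mat (fst (bs ! k))) (Suc t) = 0"
proof (induction t)
  case 0
  then show ?case using chain_step[OF k, of 0] by (simp add: matpow_Suc)
next
  case (Suc t)
  have "chain_vec w bs k (Suc t) v* matpow (cmat P - mat (fst (bs ! k))) (Suc (Suc t))
     = (chain_vec w bs k (Suc t) v* (cmat P - mat (fst (bs ! k)))) v* matpow (cmat P - mat (fst (bs ! k))) (Suc t)"
    by (simp only: matpow_Suc2 vector_matrix_mul_assoc)
  also have "\<dots> = 0" using chain_step[OF k Suc.prems] Suc by simp
  finally show ?case .
qed

lemma jvec_nil: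
  assumes i: "i \<in> {1..CARD('n)}"
  shows "\<exists>r. jvec w bs i v* matpow (cmat P - mat (jlam bs i)) r = 0"
proof -
  obtain t where "t < snd (bs ! blk_of bs i)" "jvec w bs i = chain_vec w bs (blk_of bs i) t"
    using jvec_chain[OF i] by blast
  then show ?thesis using chain_nil[OF conjunct1[OF blk_of_props[OF i]]] unfolding jlam_def by metis
qed

lemma jrank_nil:
  assumes i: "i \<in> {1..CARD('n)}"
  shows "jvec w bs i v* matpow (cmat P - mat (jlam bs i)) (jrank P w bs i) = 0"
  unfolding jrank_def using jvec_nil[OF i] by (rule LeastI_ex)

lemma jvec_re_im:
  assumes i: "i \<in> {1..CARD('n)}"
  shows "(\<forall>j. w i $ j = Re (jvec w bs i $ j)) \<or> (\<forall>j. w i $ j = Im (jvec w bs i $ j))"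
proof -
  define k where "k = blk_of bs i"
  define s where "s = blk_start bs k"
  have props: "k < length bs" "s \<le> i" "i < blk_start bs (Suc k)"
    using blk_of_props[OF i] by (simp_all add: k_def s_def)
  show ?thesis
  proof (cases "Im (fst (bs ! k)) = 0")
    case True
    then have "jvec w bs i = cvec (w i)" by (simp add: jvec_def Let_def k_def[symmetric])
    then show ?thesis by (simp add: cvec_def)
  next
    case False
    define t where "t = (i - s) div 2"
    have jv: "jvec w bs i = cvec (w (s + 2 * t)) + \<i> *s cvec (w (s + 2 * t + 1))"
      using False by (simp add: jvec_def chain_vec_def Let_def k_def[symmetric] s_def t_def)
    show ?thesis
    proof (cases "even (i - s)")
      case True
      then have "i - s = 2 * t" unfolding t_def by (metis dvd_mult_div_cancel)
      then have "i = s + 2 * t" using props by linarith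
      then show ?thesis unfolding jv by (simp add: cvec_def)
    next
      case False
      then have "i - s = 2 * t + 1" unfolding t_def by (metis odd_two_times_div_two_succ)
      then have "i = s + 2 * t + 1" using props by linarith
      then show ?thesis unfolding jv by (simp add: cvec_def)
    qed
  qed
qed

lemma partner:
  assumes i: "i \<in> {1..CARD('n)}" and im: "Im (jlam bs i) \<noteq> 0"
  shows "\<exists>i'\<in>{1..CARD('n)}. i' \<noteq> i \<and> jvec w bs i' = jvec w bs i \<and> jlam bs i' = jlam bs i"
proof -
  define k where "k = blk_of bs i"
  define s where "s = blk_start bs k"
  have props: "k < length bs" "s \<le> i" "i < blk_start bs (Suc k)"
    using blk_of_props[OF i] by (simp_all add: k_def s_def)
  have imk: "Im (fst (bs ! k)) \<noteq> 0" using im by (simp add: jlam_def k_def)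
  have Sk: "blk_start bs (Suc k) = s + 2 * snd (bs ! k)"
    using blk_size_bound[OF props(1)] imk by (simp add: s_def)
  define d where "d = i - s"
  have id: "i = s + d" using props by (simp add: d_def)
  have dl: "d < 2 * snd (bs ! k)" using props Sk by (simp add: d_def)
  have dm: "d = 2 * (d div 2) + d mod 2" by simp
  have d2: "d mod 2 = 0 \<or> d mod 2 = 1" by auto
  define i' where "i' = (if d mod 2 = 0 then i + 1 else i - 1)"
  have q: "d div 2 < snd (bs ! k)" using dl by simp
  have i'r1: "s \<le> i'"
  proof (cases "d mod 2 = 0")
    case True then show ?thesis using id unfolding i'_def by simp
  next
    case False then show ?thesis using id dm d2 unfolding i'_def by simp
  qed
  have i'r2: "i' < blk_start bs (Suc k)"
  proof (cases "d mod 2 = 0")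
    case True then show ?thesis using id dm q Sk unfolding i'_def by simp
  next
    case False then show ?thesis using id dl Sk unfolding i'_def by simp
  qed
  note i'r = i'r1 i'r2
  have ne: "i' \<noteq> i"
  proof (cases "d mod 2 = 0")
    case True then show ?thesis unfolding i'_def by simp
  next
    case False
    then have "d \<noteq> 0" by auto
    then show ?thesis using False id unfolding i'_def by simp
  qed
  have div: "(i' - s) div 2 = (i - s) div 2"
  proof (cases "d mod 2 = 0")
    case True
    then have ii: "i' = i + 1" by (simp add: i'_def)
    have "i' - s = 2 * (d div 2) + 1" "i - s = 2 * (d div 2)" using id dm True ii by linarith+
    then show ?thesis by simp
  next
    case False
    then have ii: "i' = i - 1" by (simp add: i'_def)
    have "i' - s = 2 * (d div 2)" "i - s = 2 * (d div 2) + 1" using id dm d2 False ii by linarith+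
    then show ?thesis by simp
  qed
  have bk: "blk_of bs i' = k" using i'r unfolding s_def by (rule blk_of_eq[OF props(1)])
  have i'N: "i' \<in> {1..CARD('n)}"
    using i'r blk_start_pos[of bs k] blk_start_Suc_le[of "Suc k"] unfolding s_def by auto
  have "jvec w bs i' = jvec w bs i"
    using bk imk div by (simp add: jvec_def Let_def k_def[symmetric] s_def[symmetric])
  moreover have "jlam bs i' = jlam bs i" using bk by (simp add: jlam_def k_def)
  ultimately show ?thesis using ne i'N by blast
qed

end


lemma cvec_vm: "cvec x v* cmat M = cvec (x v* M)"
  by (simp add: cvec_def cmat_def vector_matrix_mult_def vec_eq_iff)
lemma cmat_mul: "cmat A ** cmat B = cmat (A ** B)"
  by (simp add: cmat_def matrix_matrix_mult_def vec_eq_iff)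
lemma cmat_mat: "cmat (mat c) = mat (of_real c)"
  by (simp add: cmat_def mat_def vec_eq_iff)
lemma cmat_minus: "cmat (A - B) = cmat A - cmat B"
  by (simp add: cmat_def vec_eq_iff)
lemma cmat_matpow: "matpow (cmat M) n = cmat (matpow M n)"
  by (induction n) (simp_all add: matpow_Suc cmat_mul cmat_mat)
lemma cvec_eq0: "cvec x = 0 \<longleftrightarrow> x = 0"
  by (simp add: cvec_def vec_eq_iff)
lemma cvec_inj: "cvec x = cvec y \<longleftrightarrow> x = y"
  by (simp add: cvec_def vec_eq_iff)
lemma cvec_smult: "cvec (a *\<^sub>R x) = of_real a *s cvec x"
  by (simp add: cvec_def vec_eq_iff)
lemma cvec_diff: "cvec (x - y) = cvec x - cvec y"
  by (simp add: cvec_def vec_eq_iff)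

lemma re_prop:
  assumes "\<forall>j. x $ j = Re (u $ j)"
  shows "\<forall>j. (x v* M) $ j = Re ((u v* cmat M) $ j)"
  using assms by (simp add: vector_matrix_mult_def cmat_def Re_sum)
lemma im_prop:
  assumes "\<forall>j. x $ j = Im (u $ j)"
  shows "\<forall>j. (x v* M) $ j = Im ((u v* cmat M) $ j)"
  using assms by (simp add: vector_matrix_mult_def cmat_def Im_sum)

lemma norm_re_im_le:
  fixes x :: "real^'n" and u :: "complex^'n"
  assumes "(\<forall>j. x $ j = Re (u $ j)) \<or> (\<forall>j. x $ j = Im (u $ j))"
  shows "norm x \<le> norm u"
proof -
  have "norm (x $ j) \<le> norm (u $ j)" for j
    using assms abs_Re_le_cmod abs_Im_le_cmod by (metis real_norm_def)
  then show ?thesis unfolding norm_vec_def by (intro L2_set_mono) auto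
qed

lemma vsum_step:
  fixes u :: "complex^'n"
  assumes st: "stochastic P"
  shows "(\<Sum>j\<in>UNIV. (u v* (cmat P - mat l)) $ j) = (1 - l) * (\<Sum>j\<in>UNIV. u $ j)"
proof -
  have "(\<Sum>j\<in>UNIV. (u v* cmat P) $ j) = (\<Sum>i\<in>UNIV. u $ i * (\<Sum>j\<in>UNIV. of_real (P $ i $ j)))"
    unfolding vector_matrix_mult_def cmat_def
    by (simp add: sum_distrib_left) (rule sum.swap[THEN trans], simp add: mult.commute)
  also have "\<dots> = (\<Sum>i\<in>UNIV. u $ i)"
    using st unfolding stochastic_def by (metis (no_types, lifting) mult.right_neutral of_real_1 of_real_sum sum.cong)
  finally show ?thesis by (simp add: vm_minus vm_mat algebra_simps sum_subtractf sum_distrib_left)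
qed

lemma vsum_zero:
  fixes u :: "complex^'n"
  assumes st: "stochastic P" and z: "u v* matpow (cmat P - mat l) r = 0" and l: "l \<noteq> 1"
  shows "(\<Sum>j\<in>UNIV. u $ j) = 0"
proof -
  have "(\<Sum>j\<in>UNIV. (u v* matpow (cmat P - mat l) n) $ j) = (1 - l)^n * (\<Sum>j\<in>UNIV. u $ j)" for n
  proof (induction n)
    case (Suc n)
    then show ?case
      by (simp add: matpow_Suc vector_matrix_mul_assoc[symmetric] vsum_step[OF st])
  qed simp
  from this[of r] z l show ?thesis by simp
qed

context
  fixes P :: "real^'n^'n" and w :: "nat \<Rightarrow> real^'n" and bs
  assumes rjb: "real_jordan_basis P w bs"
begin

lemma w_nonzero: "i \<in> {1..CARD('n)} \<Longrightarrow> w i \<noteq> 0"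
  using rjb unfolding real_jordan_basis_def by (metis dependent_zero imageI)

lemma jvec_nonzero: "i \<in> {1..CARD('n)} \<Longrightarrow> jvec w bs i \<noteq> 0"
  using jvec_re_im[OF rjb] w_nonzero by (fastforce simp: vec_eq_iff)

lemma jrank_pos: "i \<in> {1..CARD('n)} \<Longrightarrow> jrank P w bs i \<ge> 1"
  using jrank_nil[OF rjb, of i] jvec_nonzero by (cases "jrank P w bs i") auto

lemma sum_w_zero:
  assumes st: "stochastic P" and i: "i \<in> {1..CARD('n)}" and l: "jlam bs i \<noteq> 1"
  shows "(\<Sum>j\<in>UNIV. w i $ j) = 0"
proof -
  have z: "(\<Sum>j\<in>UNIV. jvec w bs i $ j) = 0" by (rule vsum_zero[OF st jrank_nil[OF rjb i] l])
  from jvec_re_im[OF rjb i] show ?thesis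
  proof
    assume "\<forall>j. w i $ j = Re (jvec w bs i $ j)"
    then show ?thesis using arg_cong[OF z, of Re] by (simp add: Re_sum)
  next
    assume "\<forall>j. w i $ j = Im (jvec w bs i $ j)"
    then show ?thesis using arg_cong[OF z, of Im] by (simp add: Im_sum)
  qed
qed

end


context
  fixes P :: "real^'n^'n" and w :: "nat \<Rightarrow> real^'n" and bs
  assumes rjb: "real_jordan_basis P w bs"
begin

lemma indep2:
  assumes "a \<in> {1..CARD('n)}" "b \<in> {1..CARD('n)}" "a \<noteq> b" "x *\<^sub>R w a + y *\<^sub>R w b = 0"
  shows "x = 0"
proof -
  have "(\<Sum>i\<in>{a,b}. (if i = a then x else y) *\<^sub>R w i) = 0" using assms by simp
  then show ?thesis using indep_zero[OF rjb, of "{a,b}" "\<lambda>i. if i = a then x else y" a] assms by auto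
qed

lemma indep3:
  assumes "a \<in> {1..CARD('n)}" "b \<in> {1..CARD('n)}" "c \<in> {1..CARD('n)}" "a \<noteq> b" "a \<noteq> c" "b \<noteq> c"
    "x *\<^sub>R w a + y *\<^sub>R w b + z *\<^sub>R w c = 0"
  shows "x = 0"
proof -
  have "(\<Sum>i\<in>{a,b,c}. (if i = a then x else if i = b then y else z) *\<^sub>R w i) = 0"
    using assms by (simp add: algebra_simps)
  then show ?thesis
    using indep_zero[OF rjb, of "{a,b,c}" "\<lambda>i. if i = a then x else if i = b then y else z" a] assms by auto
qed

lemma N_block:
  assumes st: "stationary_dist P \<pi>" and wN: "w (CARD('n)) = \<pi>"
  shows "jlam bs (CARD('n)) = 1 \<and> jrank P w bs (CARD('n)) = 1"
proof -
  define N where "N = CARD('n)"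
  have NI: "N \<in> {1..CARD('n)}" by (simp add: N_def)
  define k where "k = blk_of bs N"
  define s where "s = blk_start bs k"
  define l where "l = fst (bs ! k)"
  have props: "k < length bs" "s \<le> N" "N < blk_start bs (Suc k)"
    using blk_of_props[OF rjb NI] by (simp_all add: k_def s_def)
  have s1: "1 \<le> s" using blk_start_pos[of bs k] by (simp add: s_def)
  have rel: "\<And>t. t < snd (bs ! k) \<Longrightarrow> chain_vec w bs k t v* cmat P =
             l *s chain_vec w bs k t + (if t = 0 then 0 else chain_vec w bs k (t - 1))"
    using rjb_blk[OF rjb props(1)] by (simp add: l_def)
  have piP: "cvec \<pi> v* cmat P = cvec \<pi>" using st by (simp add: cvec_vm stationary_dist_def)
  have "\<pi> \<noteq> 0" using st by (auto simp: stationary_dist_def)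
  then obtain j0 where j0: "\<pi> $ j0 \<noteq> 0" by (auto simp: vec_eq_iff)
  have wNpi: "w N = \<pi>" using wN by (simp add: N_def)
  have NI': "N \<le> CARD('n)" by (simp add: N_def)
  show ?thesis
  proof (cases "Im l = 0")
    case True
    define t where "t = N - s"
    have tl: "t < snd (bs ! k)" using props blk_size_bound[OF rjb props(1)] True
      by (simp add: s_def t_def l_def)
    have cvt: "chain_vec w bs k t = cvec \<pi>"
      using True props wNpi by (simp add: chain_vec_def Let_def s_def[symmetric] l_def[symmetric] t_def)
    have t0: "t = 0"
    proof (rule ccontr)
      assume tn: "t \<noteq> 0"
      have cv1: "chain_vec w bs k (t - 1) = cvec (w (N - 1))"
        using True props tn by (simp add: chain_vec_def Let_def s_def[symmetric] l_def[symmetric] t_def)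
      have e: "cvec \<pi> = l *s cvec \<pi> + cvec (w (N - 1))" using rel[OF tl] tn cvt cv1 piP by simp
      have "\<pi> $ j = Re l * \<pi> $ j + w (N - 1) $ j" for j
        using arg_cong[OF e, of "\<lambda>v. Re (v $ j)"] True by (simp add: cvec_def)
      then have "(1 - Re l) *\<^sub>R w N + (- 1) *\<^sub>R w (N - 1) = 0"
        using wNpi by (simp add: vec_eq_iff algebra_simps)
      moreover have "N - 1 \<in> {1..CARD('n)}" "N - 1 \<noteq> N" using tn s1 props NI' by (auto simp: t_def)
      ultimately have "- 1 = (0::real)" using indep2[of "N - 1" N "-1" "1 - Re l"] NI
        by (simp add: N_def add.commute)
      then show False by simp
    qed
    have e: "cvec \<pi> = l *s cvec \<pi>" using rel[OF tl] t0 cvt piP by simp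
    have "complex_of_real (\<pi> $ j0) = l * complex_of_real (\<pi> $ j0)"
      using arg_cong[OF e, of "\<lambda>v. v $ j0"] by (simp add: cvec_def)
    then have l1: "l = 1" using j0 by simp
    have jl: "jlam bs N = 1" using l1 by (simp add: jlam_def k_def l_def)
    have jv: "jvec w bs N = cvec \<pi>" using True wNpi by (simp add: jvec_def Let_def k_def[symmetric] l_def[symmetric])
    have "jrank P w bs N = 1" unfolding jrank_def jl jv
    proof (rule Least_equality)
      show "cvec \<pi> v* matpow (cmat P - mat 1) 1 = 0"
        using piP by (simp add: matpow_Suc vm_minus vm_mat)
    next
      fix y assume "cvec \<pi> v* matpow (cmat P - mat 1) y = 0"
      then show "1 \<le> y" using \<open>\<pi> \<noteq> 0\<close> by (cases y) (auto simp: cvec_eq0)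
    qed
    then show ?thesis using jl by (simp add: N_def)
  next
    case False
    define d where "d = N - s"
    define t where "t = d div 2"
    have Sk: "blk_start bs (Suc k) = s + 2 * snd (bs ! k)"
      using blk_size_bound[OF rjb props(1)] False by (simp add: s_def l_def)
    have le: "s + 2 * snd (bs ! k) \<le> N + 1" using blk_start_Suc_le[OF rjb, of "Suc k"] Sk by (simp add: N_def)
    have dm: "d = 2 * t + d mod 2" unfolding t_def by simp
    have tl: "t < snd (bs ! k)" using props Sk unfolding t_def d_def by simp
    have odd: "d mod 2 = 1"
    proof (rule ccontr)
      assume "d mod 2 \<noteq> 1"
      then have "d mod 2 = 0" by auto
      then have "N = s + 2 * t" using dm props(2) unfolding d_def by linarith
      then show False using tl le by linarith
    qed
    have Nst: "N = s + 2 * t + 1" using dm odd props(2) unfolding d_def by linarith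
    have cvt: "chain_vec w bs k t = cvec (w (N - 1)) + \<i> *s cvec \<pi>"
      using False Nst wNpi by (simp add: chain_vec_def Let_def s_def[symmetric] l_def[symmetric])
    have lhs: "chain_vec w bs k t v* cmat P = cvec (w (N - 1) v* P) + \<i> *s cvec \<pi>"
      unfolding cvt using st by (simp add: vm_add_left vm_scale_left cvec_vm stationary_dist_def)
    have imrel: "\<pi> $ j = Im l * w (N - 1) $ j + Re l * \<pi> $ j
                  + (if t = 0 then 0 else w (N - 2) $ j)" for j
    proof -
      have e: "cvec (w (N - 1) v* P) + \<i> *s cvec \<pi> =
                l *s (cvec (w (N - 1)) + \<i> *s cvec \<pi>) + (if t = 0 then 0 else chain_vec w bs k (t - 1))"
        using rel[OF tl] lhs cvt by simp
      show ?thesis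
      proof (cases "t = 0")
        case True
        then show ?thesis using arg_cong[OF e, of "\<lambda>v. Im (v $ j)"] by (simp add: cvec_def)
      next
        case tn: False
        have cv1: "chain_vec w bs k (t - 1) = cvec (w (N - 3)) + \<i> *s cvec (w (N - 2))"
        proof -
          have "s + 2 * (t - 1) = N - 3" "s + 2 * (t - 1) + 1 = N - 2" using Nst tn by auto
          then show ?thesis using False by (simp add: chain_vec_def Let_def s_def[symmetric] l_def[symmetric])
        qed
        show ?thesis using arg_cong[OF e, of "\<lambda>v. Im (v $ j)"] tn cv1 by (simp add: cvec_def)
      qed
    qed
    have "Im l \<noteq> 0" using False .
    show ?thesis
    proof (cases "t = 0")
      case True
      have "(- Im l) *\<^sub>R w (N - 1) + (1 - Re l) *\<^sub>R w N = 0"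
        using imrel True wNpi by (simp add: vec_eq_iff algebra_simps)
      moreover have "N - 1 \<in> {1..CARD('n)}" "N - 1 \<noteq> N" using Nst s1 NI' by auto
      ultimately have "- Im l = 0" using indep2[of "N - 1" N "- Im l" "1 - Re l"] NI by (simp add: N_def)
      then show ?thesis using False by simp
    next
      case tn: False
      have "(- Im l) *\<^sub>R w (N - 1) + (1 - Re l) *\<^sub>R w N + (- 1) *\<^sub>R w (N - 2) = 0"
        using imrel tn wNpi by (simp add: vec_eq_iff algebra_simps)
      moreover have "N - 1 \<in> {1..CARD('n)}" "N - 2 \<in> {1..CARD('n)}" "N - 1 \<noteq> N" "N - 1 \<noteq> N - 2" "N \<noteq> N - 2"
        using Nst s1 NI' tn by auto
      ultimately have "- Im l = 0" using indep3[of "N - 1" N "N - 2" "- Im l" "1 - Re l" "-1"] NI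
        by (simp add: N_def)
      then show ?thesis using False by simp
    qed
  qed
qed

end


lemma norm_smult_cart: "norm (c *s (x::'a::real_normed_field^'n)) = norm c * norm x"
  unfolding norm_vec_def by (simp add: norm_mult L2_set_right_distrib)

lemma H_sum_le:
  assumes H: "norm_on UNIV H"
  shows "H (\<Sum>i\<in>A. f i) \<le> (\<Sum>i\<in>A. H (f i))"
proof (induction A rule: infinite_finite_induct)
  case (infinite A)
  have "H 0 = 0" using H unfolding norm_on_def by blast
  then show ?case using infinite by simp
next
  case empty
  have "H 0 = 0" using H unfolding norm_on_def by blast
  then show ?case by simp
next
  case (insert x F)
  have "H (f x + sum f F) \<le> H (f x) + H (sum f F)" using H unfolding norm_on_def by blast
  then show ?case using insert by simp
qed

lemma H_lip:
  assumes H: "norm_on UNIV H"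
  shows "\<exists>K\<ge>0. \<forall>x y. \<bar>H x - H y\<bar> \<le> K * norm (x - y)"
proof -
  define K where "K = (\<Sum>j\<in>UNIV. H (axis j (1::real)))"
  have Hn: "H x \<ge> 0" for x using H unfolding norm_on_def by blast
  have Hs: "H (a *\<^sub>R x) = \<bar>a\<bar> * H x" for a x using H unfolding norm_on_def by blast
  have Ht: "H (x + y) \<le> H x + H y" for x y using H unfolding norm_on_def by blast
  have K0: "K \<ge> 0" unfolding K_def by (intro sum_nonneg) (simp add: Hn)
  have bnd: "H x \<le> K * norm x" for x :: "real^'a"
  proof -
    have "H x = H (\<Sum>j\<in>UNIV. x $ j *\<^sub>R axis j 1)"
      using basis_expansion[of x] by (simp add: scalar_mult_eq_scaleR)
    also have "\<dots> \<le> (\<Sum>j\<in>UNIV. H (x $ j *\<^sub>R axis j 1))" by (rule H_sum_le[OF H])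
    also have "\<dots> = (\<Sum>j\<in>UNIV. \<bar>x $ j\<bar> * H (axis j 1))" by (simp add: Hs)
    also have "\<dots> \<le> (\<Sum>j\<in>UNIV. norm x * H (axis j 1))"
      by (intro sum_mono mult_right_mono component_le_norm_cart Hn)
    also have "\<dots> = K * norm x" by (simp add: K_def sum_distrib_left mult.commute)
    finally show ?thesis .
  qed
  have "\<bar>H x - H y\<bar> \<le> K * norm (x - y)" for x y
  proof -
    have "H x \<le> H y + H (x - y)" using Ht[of y "x - y"] by simp
    moreover have "H y \<le> H x + H (x - y)"
    proof -
      have "H (y - x) = H ((-1) *\<^sub>R (x - y))" by simp
      then have "H (y - x) = H (x - y)" using Hs[of "-1" "x - y"] by simp
      then show ?thesis using Ht[of x "y - x"] by simp
    qed
    ultimately show ?thesis using bnd[of "x - y"] by linarith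
  qed
  then show ?thesis using K0 by blast
qed

lemma stat_pow: "\<pi> v* P = \<pi> \<Longrightarrow> \<pi> v* matpow P n = \<pi>"
  by (induction n) (simp_all add: matpow_Suc vector_matrix_mul_assoc[symmetric])

context
  fixes P :: "real^'n^'n" and w :: "nat \<Rightarrow> real^'n" and bs
  assumes rjb: "real_jordan_basis P w bs"
begin

lemma wpow_bound:
  assumes i: "i \<in> {1..CARD('n)}"
  shows "norm (w i v* matpow P n) \<le>
    (\<Sum>k<jrank P w bs i. real (n choose k) * cmod (jlam bs i) ^ (n - k) *
        norm (jvec w bs i v* matpow (cmat P - mat (jlam bs i)) k))"
proof -
  let ?u = "jvec w bs i"
  have "norm (w i v* matpow P n) \<le> norm (?u v* cmat (matpow P n))"
    using jvec_re_im[OF rjb i] re_prop[of "w i" ?u "matpow P n"] im_prop[of "w i" ?u "matpow P n"] by (intro norm_re_im_le) blast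
  also have "?u v* cmat (matpow P n) = ?u v* matpow (cmat P) n" by (simp add: cmat_matpow)
  also have "\<dots> = (\<Sum>k<jrank P w bs i. (of_nat (n choose k) * jlam bs i ^ (n - k)) *s
                   (?u v* matpow (cmat P - mat (jlam bs i)) k))"
    by (rule binom_expand[OF jrank_nil[OF rjb i]])
  also have "norm \<dots> \<le> (\<Sum>k<jrank P w bs i. real (n choose k) * cmod (jlam bs i) ^ (n - k) *
        norm (?u v* matpow (cmat P - mat (jlam bs i)) k))"
    by (rule order_trans[OF norm_sum]) (simp add: norm_smult_cart norm_mult norm_power)
  finally show ?thesis .
qed

lemma jvec_real:
  assumes "Im (jlam bs i) = 0"
  shows "jvec w bs i = cvec (w i)"
  using assms by (simp add: jvec_def jlam_def Let_def)

end


lemma pow_x_lim: "0 < x \<Longrightarrow> x < 1 \<Longrightarrow> (\<lambda>n. real n ^ k * x ^ n) \<longlonglongrightarrow> 0"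
  by real_asymp
lemma pow_ratio_lim: "k < R \<Longrightarrow> (\<lambda>n. real n ^ k / real n ^ R) \<longlonglongrightarrow> 0"
  by real_asymp

lemma binom_ratio_lim:
  fixes \<rho> \<mu> :: real
  assumes r0: "0 \<le> \<rho>" and rm: "\<rho> \<le> \<mu>" and m0: "0 < \<mu>" and c: "\<rho> < \<mu> \<or> k < R"
  shows "(\<lambda>n. real (n choose k) * \<rho>^(n-k) / (real (n choose R) * \<mu>^(n-R))) \<longlonglongrightarrow> 0"
proof (cases "k < R")
  case True
  define b where "b n = \<mu>^(R-k) * real R ^ R * (real n ^ k / real n ^ R)" for n
  have b: "b \<longlonglongrightarrow> 0" unfolding b_def
    using tendsto_mult_right_zero[OF pow_ratio_lim[OF True]] by simp
  show ?thesis
  proof (rule tendsto_sandwich[OF _ _ tendsto_const b])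
    show "\<forall>\<^sub>F n in sequentially. 0 \<le> real (n choose k) * \<rho>^(n-k) / (real (n choose R) * \<mu>^(n-R))"
      using r0 m0 by (intro always_eventually allI divide_nonneg_nonneg mult_nonneg_nonneg) auto
    have "real (n choose k) * \<rho>^(n-k) / (real (n choose R) * \<mu>^(n-R)) \<le> b n" if n: "n \<ge> R" for n
    proof -
      have nk: "k \<le> n" using n True by simp
      have npos: "real n > 0" using n True by simp
      have h1: "real (n choose k) \<le> real n ^ k" using binomial_le_pow[OF nk] by (metis of_nat_le_iff of_nat_power)
      have h2: "(real n / real R) ^ R \<le> real (n choose R)" using binomial_ge_n_over_k_pow_k[OF n] by simp
      have Rpos: "real R > 0" using True by simp
      have h2': "0 < (real n / real R) ^ R" using npos Rpos by simp
      have h3: "\<rho>^(n-k) \<le> \<mu>^(n-k)" using r0 rm by (simp add: power_mono)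
      have h4: "\<mu>^(n-k) = \<mu>^(R-k) * \<mu>^(n-R)" using n True by (simp flip: power_add)
      have "real (n choose k) * \<rho>^(n-k) / (real (n choose R) * \<mu>^(n-R))
          \<le> real n ^ k * \<mu>^(n-k) / ((real n / real R) ^ R * \<mu>^(n-R))"
        using h1 h2 h2' h3 m0 r0
        by (intro frac_le mult_mono mult_pos_pos) auto
      also have "\<dots> = b n" unfolding b_def h4 using npos Rpos m0
        by (simp add: power_divide field_simps)
      finally show ?thesis .
    qed
    then show "\<forall>\<^sub>F n in sequentially. real (n choose k) * \<rho>^(n-k) / (real (n choose R) * \<mu>^(n-R)) \<le> b n"
      unfolding eventually_sequentially by blast
  qed
next
  case False
  then have lt: "\<rho> < \<mu>" using c by simp
  show ?thesis
  proof (cases "\<rho> = 0")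
    case True
    have "\<forall>\<^sub>F n in sequentially. real (n choose k) * \<rho>^(n-k) / (real (n choose R) * \<mu>^(n-R)) = 0"
      unfolding eventually_sequentially True by (intro exI[of _ "Suc k"]) auto
    then show ?thesis by (rule tendsto_eventually)
  next
    case False
    then have rp: "\<rho> > 0" using r0 by simp
    define b where "b n = (\<mu>^R / \<rho>^k) * (real n ^ k * (\<rho>/\<mu>) ^ n)" for n
    have b: "b \<longlonglongrightarrow> 0" unfolding b_def
      using rp lt m0 by (intro tendsto_mult_right_zero pow_x_lim) auto
    show ?thesis
    proof (rule tendsto_sandwich[OF _ _ tendsto_const b])
      show "\<forall>\<^sub>F n in sequentially. 0 \<le> real (n choose k) * \<rho>^(n-k) / (real (n choose R) * \<mu>^(n-R))"
        using r0 m0 by (intro always_eventually allI divide_nonneg_nonneg mult_nonneg_nonneg) auto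
      have "real (n choose k) * \<rho>^(n-k) / (real (n choose R) * \<mu>^(n-R)) \<le> b n" if n: "n \<ge> k + R" for n
      proof -
        have nk: "k \<le> n" "R \<le> n" using n by auto
        have h1: "real (n choose k) \<le> real n ^ k" using binomial_le_pow[OF nk(1)] by (metis of_nat_le_iff of_nat_power)
        have h2: "1 \<le> real (n choose R)" using nk(2) by (simp add: Suc_leI)
        have e1: "\<rho>^(n-k) = \<rho>^n / \<rho>^k" using nk rp by (simp add: power_diff)
        have e2: "\<mu>^(n-R) = \<mu>^n / \<mu>^R" using nk m0 by (simp add: power_diff)
        have "real (n choose k) * \<rho>^(n-k) / (real (n choose R) * \<mu>^(n-R))
            \<le> real n ^ k * \<rho>^(n-k) / (1 * \<mu>^(n-R))"
          using h1 h2 m0 rp by (intro frac_le mult_mono mult_pos_pos) auto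
        also have "\<dots> = b n" unfolding b_def e1 e2 using rp m0
          by (simp add: power_divide field_simps)
        finally show ?thesis .
      qed
      then show "\<forall>\<^sub>F n in sequentially. real (n choose k) * \<rho>^(n-k) / (real (n choose R) * \<mu>^(n-R)) \<le> b n"
        unfolding eventually_sequentially by blast
    qed
  qed
qed
theorem corollary2:
  fixes P :: "real^'n^'n" and \<pi> :: "real^'n"
    and w :: "nat \<Rightarrow> real^'n" and bs :: "(complex \<times> nat) list"
    and nrm :: "real^'n \<Rightarrow> real" and \<sigma> :: "nat \<Rightarrow> 'n"
  defines "N \<equiv> CARD('n)"
  defines "\<mu>0 \<equiv> Max ((\<lambda>i. cmod (jlam bs i)) ` {1..<N})"
  defines "r0 \<equiv> Max (jrank P w bs ` {i \<in> {1..<N}. cmod (jlam bs i) = \<mu>0})"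
  defines "q \<equiv> (\<lambda>j::'n. nrm (Pi_proj P w bs \<mu>0 r0 (axis j 1)))"
  assumes "stochastic P" and "irreducible_mc P" and "aperiodic_mc P"
    and "stationary_dist P \<pi>"
    and "real_jordan_basis P w bs" and "w N = \<pi>"
    and "\<mu>0 > 0"
    and "dim (range (Pi_proj P w bs \<mu>0 r0)) = 1"
    and "norm_on (range (Pi_proj P w bs \<mu>0 r0)) nrm"
    and "bij_betw \<sigma> {1..N} (UNIV :: 'n set)"
    and "\<forall>k\<in>{1..<N}. q (\<sigma> k) < q (\<sigma> (Suc k))"
  shows "\<forall>H. norm_on UNIV H \<longrightarrow>
           (\<exists>n0. \<forall>n>n0. \<forall>k\<in>{1..<N}.
              H (axis (\<sigma> k) 1 v* matpow P n - \<pi>) < H (axis (\<sigma> (Suc k)) 1 v* matpow P n - \<pi>))"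
proof (intro allI impI)
  fix H :: "real^'n \<Rightarrow> real" assume H: "norm_on UNIV H"
  note st = assms(5) and stat = assms(8) and rjb = assms(9) and wN = assms(10) and mu0 = assms(11)
    and dim1 = assms(12) and nrmV = assms(13) and qmono = assms(15)
  show "\<exists>n0. \<forall>n>n0. \<forall>k\<in>{1..<N}.
          H (axis (\<sigma> k) 1 v* matpow P n - \<pi>) < H (axis (\<sigma> (Suc k)) 1 v* matpow P n - \<pi>)"
  proof (cases "N < 2")
    case True
    then show ?thesis by auto
  next
    case False
    then have N2: "N \<ge> 2" by simp
    have NC: "N = CARD('n)" by (simp add: N_def)
    have fin1: "finite {1..<N}" and ne1: "{1..<N} \<noteq> {}" using N2 by auto
    have mu_ge: "cmod (jlam bs i) \<le> \<mu>0" if "i \<in> {1..<N}" for i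
      unfolding \<mu>0_def using fin1 that by (intro Max_ge) auto
    have "\<mu>0 \<in> (\<lambda>i. cmod (jlam bs i)) ` {1..<N}" unfolding \<mu>0_def using fin1 ne1 by (intro Max_in) auto
    then obtain i0 where i0: "i0 \<in> {1..<N}" "cmod (jlam bs i0) = \<mu>0" by auto
    define J where "J = {i \<in> {1..<N}. cmod (jlam bs i) = \<mu>0}"
    have finJ: "finite J" and neJ: "J \<noteq> {}" using i0 by (auto simp: J_def)
    have r0J: "r0 = Max (jrank P w bs ` J)" by (simp add: r0_def J_def)
    have r_ge: "jrank P w bs i \<le> r0" if "i \<in> J" for i
      unfolding r0J using finJ that by (intro Max_ge) auto
    have "r0 \<in> jrank P w bs ` J" unfolding r0J using finJ neJ by (intro Max_in) auto
    then obtain m where mJ: "m \<in> J" and rm: "jrank P w bs m = r0" by auto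
    define S where "S = {i \<in> {1..N}. cmod (jlam bs i) = \<mu>0 \<and> jrank P w bs i = r0}"
    have PiS: "Pi_proj P w bs \<mu>0 r0 = bproj w S" by (simp add: Pi_proj_def S_def NC)
    have SI: "S \<subseteq> {1..CARD('n)}" by (auto simp: S_def NC)
    have cardS: "card S = 1" using dim1 dim_bproj[OF rjb SI] PiS by simp
    have mS: "m \<in> S" using mJ rm by (auto simp: J_def S_def)
    have Sm: "S = {m}" using cardS mS by (metis card_1_singletonE singletonD)
    have inS: "i = m" if "i \<in> {1..N}" "cmod (jlam bs i) = \<mu>0" "jrank P w bs i = r0" for i
      using that Sm by (auto simp: S_def)
    have mI: "m \<in> {1..<N}" and mabs: "cmod (jlam bs m) = \<mu>0" using mJ by (auto simp: J_def)
    have mI': "m \<in> {1..CARD('n)}" using mI by (auto simp: NC)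
    have real_m: "Im (jlam bs m) = 0"
    proof (rule ccontr)
      assume "Im (jlam bs m) \<noteq> 0"
      then obtain i' where i': "i' \<in> {1..CARD('n)}" "i' \<noteq> m" "jvec w bs i' = jvec w bs m" "jlam bs i' = jlam bs m"
        using partner[OF rjb mI'] by blast
      have "jrank P w bs i' = jrank P w bs m" using i' by (simp add: jrank_def)
      then have "i' = m" using i' mabs rm by (intro inS) (auto simp: NC)
      then show False using i' by simp
    qed
    define lr where "lr = Re (jlam bs m)"
    have jlm: "jlam bs m = of_real lr" using real_m by (simp add: lr_def complex_eq_iff)
    have abs_lr: "\<bar>lr\<bar> = \<mu>0" using mabs jlm by simp
    have jvm: "jvec w bs m = cvec (w m)" by (rule jvec_real[OF rjb real_m])
    have r0pos: "r0 \<ge> 1" using jrank_pos[OF rjb mI'] rm by simp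
    define R where "R = r0 - 1"
    have r0R: "r0 = Suc R" using r0pos by (simp add: R_def)
    have cB: "cmat P - mat (jlam bs m) = cmat (P - mat lr)" by (simp add: jlm cmat_minus cmat_mat)
    have cpow: "jvec w bs m v* matpow (cmat P - mat (jlam bs m)) r = cvec (w m v* matpow (P - mat lr) r)" for r
      by (simp add: jvm cB cmat_matpow cvec_vm)
    have nilm: "w m v* matpow (P - mat lr) r0 = 0"
      using jrank_nil[OF rjb mI'] rm cpow by (simp add: cvec_eq0)
    define v0 where "v0 = w m v* matpow (P - mat lr) R"
    have v0nz: "v0 \<noteq> 0"
    proof -
      have "R < (LEAST r. jvec w bs m v* matpow (cmat P - mat (jlam bs m)) r = 0)"
        using rm r0R by (simp add: jrank_def)
      then have "jvec w bs m v* matpow (cmat P - mat (jlam bs m)) R \<noteq> 0" by (rule not_less_Least)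
      then show ?thesis by (simp add: cpow cvec_eq0 v0_def)
    qed
    define vk where "vk k = w m v* matpow (P - mat lr) k" for k
    have expm: "w m v* matpow P n = (\<Sum>k<r0. (real (n choose k) * lr^(n-k)) *\<^sub>R vk k)" for n
      using binom_expand[OF nilm, of n] by (simp add: scalar_mult_eq_scaleR vk_def)
    define g where "g n = real (n choose R) * \<mu>0^(n-R)" for n
    have g0: "g n \<ge> 0" for n using mu0 by (simp add: g_def)
    have gpos: "eventually (\<lambda>n. g n > 0) sequentially"
      unfolding eventually_sequentially g_def using mu0 by (intro exI[of _ R]) auto
    have L: "(\<lambda>n. real (n choose k) * \<rho>^(n-k) / g n) \<longlonglongrightarrow> 0"
      if "0 \<le> \<rho>" "\<rho> \<le> \<mu>0" "\<rho> < \<mu>0 \<or> k < R" for \<rho> k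
      unfolding g_def using binom_ratio_lim[OF that(1,2) mu0 that(3)] .
    define A where "A = {1..<N} - {m}"
    have T1: "(\<lambda>n. norm (w i v* matpow P n) / g n) \<longlonglongrightarrow> 0" if iA: "i \<in> A" for i
    proof -
      have iI: "i \<in> {1..CARD('n)}" and iI1: "i \<in> {1..<N}" and im: "i \<noteq> m" using iA by (auto simp: A_def NC)
      define \<rho> where "\<rho> = cmod (jlam bs i)"
      define M where "M k = norm (jvec w bs i v* matpow (cmat P - mat (jlam bs i)) k)" for k
      have cond: "\<rho> < \<mu>0 \<or> k < R" if "k < jrank P w bs i" for k
      proof (cases "\<rho> = \<mu>0")
        case True
        then have "i \<in> J" using iI1 by (simp add: J_def \<rho>_def)
        then have "jrank P w bs i \<le> r0" by (rule r_ge)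
        moreover have "jrank P w bs i \<noteq> r0" using inS[of i] True im iI1 by (auto simp: \<rho>_def)
        ultimately show ?thesis using that r0R by simp
      next
        case False
        then show ?thesis using mu_ge[OF iI1] by (simp add: \<rho>_def)
      qed
      have lim: "(\<lambda>n. \<Sum>k<jrank P w bs i. real (n choose k) * \<rho>^(n-k) / g n * M k) \<longlonglongrightarrow> 0"
        using cond mu_ge[OF iI1] by (intro tendsto_null_sum tendsto_mult_left_zero L) (auto simp: \<rho>_def)
      show ?thesis
      proof (rule tendsto_sandwich[OF _ _ tendsto_const lim])
        show "\<forall>\<^sub>F n in sequentially. 0 \<le> norm (w i v* matpow P n) / g n"
          using g0 by (intro always_eventually allI divide_nonneg_nonneg) auto
        have "norm (w i v* matpow P n) / g n \<le> (\<Sum>k<jrank P w bs i. real (n choose k) * \<rho>^(n-k) / g n * M k)" for n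
        proof -
          have "norm (w i v* matpow P n) / g n \<le> (\<Sum>k<jrank P w bs i. real (n choose k) * \<rho>^(n-k) * M k) / g n"
            using wpow_bound[OF rjb iI, of n] g0[of n] by (intro divide_right_mono) (simp_all add: \<rho>_def M_def)
          also have "\<dots> = (\<Sum>k<jrank P w bs i. real (n choose k) * \<rho>^(n-k) / g n * M k)"
            by (simp add: sum_divide_distrib)
          finally show ?thesis .
        qed
        then show "\<forall>\<^sub>F n in sequentially. norm (w i v* matpow P n) / g n \<le> (\<Sum>k<jrank P w bs i. real (n choose k) * \<rho>^(n-k) / g n * M k)"
          by simp
      qed
    qed
    define E where "E n = w m v* matpow P n - (real (n choose R) * lr^(n-R)) *\<^sub>R v0" for n
    have Eeq: "E n = (\<Sum>k<R. (real (n choose k) * lr^(n-k)) *\<^sub>R vk k)" for n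
      unfolding E_def expm r0R by (simp add: vk_def v0_def)
    have T2: "(\<lambda>n. norm (E n) / g n) \<longlonglongrightarrow> 0"
    proof -
      have lim: "(\<lambda>n. \<Sum>k<R. real (n choose k) * \<mu>0^(n-k) / g n * norm (vk k)) \<longlonglongrightarrow> 0"
        using mu0 by (intro tendsto_null_sum tendsto_mult_left_zero L) auto
      show ?thesis
      proof (rule tendsto_sandwich[OF _ _ tendsto_const lim])
        show "\<forall>\<^sub>F n in sequentially. 0 \<le> norm (E n) / g n"
          using g0 by (intro always_eventually allI divide_nonneg_nonneg) auto
        have "norm (E n) / g n \<le> (\<Sum>k<R. real (n choose k) * \<mu>0^(n-k) / g n * norm (vk k))" for n
        proof -
          have "norm (E n) \<le> (\<Sum>k<R. real (n choose k) * \<mu>0^(n-k) * norm (vk k))"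
            unfolding Eeq by (rule order_trans[OF norm_sum]) (simp add: abs_mult power_abs abs_lr)
          then have "norm (E n) / g n \<le> (\<Sum>k<R. real (n choose k) * \<mu>0^(n-k) * norm (vk k)) / g n"
            using g0[of n] by (rule divide_right_mono)
          also have "\<dots> = (\<Sum>k<R. real (n choose k) * \<mu>0^(n-k) / g n * norm (vk k))"
            by (simp add: sum_divide_distrib)
          finally show ?thesis .
        qed
        then show "\<forall>\<^sub>F n in sequentially. norm (E n) / g n \<le> (\<Sum>k<R. real (n choose k) * \<mu>0^(n-k) / g n * norm (vk k))"
          by simp
      qed
    qed
    define c where "c j = bcoord w (axis j (1::real))" for j
    have rep: "axis j 1 = (\<Sum>i\<in>{1..N}. c j i *\<^sub>R w i)" for j
      unfolding c_def NC by (rule bcoord_rep(1)[OF rjb])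
    have NI: "N \<in> {1..N}" using N2 by simp
    have piPn: "\<pi> v* matpow P n = \<pi>" for n using stat by (intro stat_pow) (simp add: stationary_dist_def)
    have T3: "(\<lambda>n. \<bar>c j N - 1\<bar> / g n) \<longlonglongrightarrow> 0" for j
    proof (cases "c j N = 1")
      case True then show ?thesis by simp
    next
      case False
      have "\<exists>i\<in>{1..<N}. jlam bs i = 1"
      proof (rule ccontr)
        assume "\<not> ?thesis"
        then have z: "(\<Sum>l\<in>UNIV. w i $ l) = 0" if "i \<in> {1..<N}" for i
          using sum_w_zero[OF rjb st] that by (auto simp: NC)
        have "(1::real) = (\<Sum>l\<in>UNIV. axis j 1 $ l)" by (simp add: axis_def)
        also have "\<dots> = (\<Sum>l\<in>UNIV. \<Sum>i\<in>{1..N}. c j i * w i $ l)"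
          by (subst rep) (simp add: sum_component)
        also have "\<dots> = (\<Sum>i\<in>{1..N}. c j i * (\<Sum>l\<in>UNIV. w i $ l))"
          by (subst sum.swap) (simp add: sum_distrib_left)
        also have "\<dots> = (\<Sum>i\<in>insert N {1..<N}. c j i * (\<Sum>l\<in>UNIV. w i $ l))"
          using N2 by (intro sum.cong) auto
        also have "\<dots> = c j N * (\<Sum>l\<in>UNIV. \<pi> $ l)" using z wN by simp
        also have "\<dots> = c j N" using stat by (simp add: stationary_dist_def)
        finally show False using False by simp
      qed
      then obtain i1 where i1: "i1 \<in> {1..<N}" "jlam bs i1 = 1" by blast
      have one: "1 \<le> \<mu>0" using mu_ge[OF i1(1)] i1(2) by simp
      have cnd: "1 < \<mu>0 \<or> 0 < R"
      proof (rule ccontr)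
        assume "\<not> ?thesis"
        then have "\<mu>0 = 1" "r0 = 1" using one r0R by auto
        moreover have "jlam bs N = 1 \<and> jrank P w bs N = 1" using N_block[OF rjb stat] wN by (simp add: NC)
        ultimately have "N = m" using NI by (intro inS) auto
        then show False using mI by simp
      qed
      have "(\<lambda>n. real (n choose 0) * 1^(n-0) / g n) \<longlonglongrightarrow> 0" using one cnd by (intro L) auto
      then have "(\<lambda>n. 1 / g n) \<longlonglongrightarrow> 0" by simp
      from tendsto_mult_right_zero[OF this, of "\<bar>c j N - 1\<bar>"] show ?thesis by simp
    qed
    define D where "D j n = axis j 1 v* matpow P n - \<pi> - (c j m * (real (n choose R) * lr^(n-R))) *\<^sub>R v0" for j n
    have Deq: "D j n = (c j N - 1) *\<^sub>R \<pi> + c j m *\<^sub>R E n + (\<Sum>i\<in>A. c j i *\<^sub>R (w i v* matpow P n))" for j n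
    proof -
      have split: "{1..N} = insert N (insert m A)" using N2 mI by (auto simp: A_def)
      have fin: "finite A" "m \<notin> A" "N \<notin> A" "N \<noteq> m" using mI by (auto simp: A_def)
      have "axis j 1 v* matpow P n = (\<Sum>i\<in>{1..N}. c j i *\<^sub>R (w i v* matpow P n))"
        by (subst rep) (simp add: vm_sum_left vm_smult_left)
      also have "\<dots> = c j N *\<^sub>R \<pi> + c j m *\<^sub>R (w m v* matpow P n) + (\<Sum>i\<in>A. c j i *\<^sub>R (w i v* matpow P n))"
        unfolding split using fin by (simp add: wN piPn add.assoc)
      finally show ?thesis unfolding D_def E_def by (simp add: algebra_simps)
    qed
    have Dlim: "(\<lambda>n. norm (D j n) / g n) \<longlonglongrightarrow> 0" for j
    proof -
      define b where "b n = \<bar>c j N - 1\<bar> / g n * norm \<pi> + \<bar>c j m\<bar> * (norm (E n) / g n)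
                 + (\<Sum>i\<in>A. \<bar>c j i\<bar> * (norm (w i v* matpow P n) / g n))" for n
      have lim: "b \<longlonglongrightarrow> 0" unfolding b_def
        using T1 T2 T3[of j]
        by (intro tendsto_add_zero tendsto_mult_left_zero tendsto_mult_right_zero tendsto_null_sum) auto
      show ?thesis
      proof (rule tendsto_sandwich[OF _ _ tendsto_const lim])
        show "\<forall>\<^sub>F n in sequentially. 0 \<le> norm (D j n) / g n"
          using g0 by (intro always_eventually allI divide_nonneg_nonneg) auto
        have "norm (D j n) / g n \<le> b n" for n
        proof -
          have "norm (D j n) \<le> \<bar>c j N - 1\<bar> * norm \<pi> + \<bar>c j m\<bar> * norm (E n)
                 + (\<Sum>i\<in>A. \<bar>c j i\<bar> * norm (w i v* matpow P n))"
            unfolding Deq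
            by (rule order_trans[OF norm_triangle_ineq] add_mono order_trans[OF norm_sum] sum_mono
                 | simp)+
          then have "norm (D j n) / g n \<le> (\<bar>c j N - 1\<bar> * norm \<pi> + \<bar>c j m\<bar> * norm (E n)
                 + (\<Sum>i\<in>A. \<bar>c j i\<bar> * norm (w i v* matpow P n))) / g n"
            using g0[of n] by (rule divide_right_mono)
          also have "\<dots> = b n" unfolding b_def by (simp add: add_divide_distrib sum_divide_distrib)
          finally show ?thesis .
        qed
        then show "\<forall>\<^sub>F n in sequentially. norm (D j n) / g n \<le> b n" by simp
      qed
    qed
    obtain K where K0: "K \<ge> 0" and Klip: "\<forall>x y. \<bar>H x - H y\<bar> \<le> K * norm (x - y)" using H_lip[OF H] by blast
    have Hs: "H (a *\<^sub>R x) = \<bar>a\<bar> * H x" for a x using H unfolding norm_on_def by blast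
    have Hpos: "H x > 0" if "x \<noteq> 0" for x using H that unfolding norm_on_def by (metis UNIV_I less_eq_real_def)
    define Lj where "Lj j = \<bar>c j m\<bar> * H v0" for j
    have Flim: "(\<lambda>n. H (axis j 1 v* matpow P n - \<pi>) / g n) \<longlonglongrightarrow> Lj j" for j
    proof -
      have ev: "eventually (\<lambda>n. norm (H (axis j 1 v* matpow P n - \<pi>) / g n - Lj j) \<le> K * (norm (D j n) / g n)) sequentially"
        using gpos
      proof eventually_elim
        case (elim n)
        define T where "T = (c j m * (real (n choose R) * lr^(n-R))) *\<^sub>R v0"
        have HT: "H T = Lj j * g n"
          unfolding T_def Hs Lj_def g_def using abs_lr by (simp add: abs_mult power_abs)
        have x: "axis j 1 v* matpow P n - \<pi> = T + D j n" by (simp add: D_def T_def)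
        have d: "\<bar>H (T + D j n) - H T\<bar> \<le> K * norm (D j n)" using Klip by (metis add_diff_cancel_left')
        have "H (T + D j n) / g n - Lj j = (H (T + D j n) - H T) / g n"
          using HT elim by (simp add: diff_divide_distrib)
        then have "norm (H (T + D j n) / g n - Lj j) = \<bar>H (T + D j n) - H T\<bar> / g n"
          using elim by simp
        also have "\<dots> \<le> K * norm (D j n) / g n" using d elim by (intro divide_right_mono) auto
        finally show ?case unfolding x by simp
      qed
      have "(\<lambda>n. K * (norm (D j n) / g n)) \<longlonglongrightarrow> 0" using Dlim[of j] by (rule tendsto_mult_right_zero)
      then have "(\<lambda>n. H (axis j 1 v* matpow P n - \<pi>) / g n - Lj j) \<longlonglongrightarrow> 0"
        by (rule Lim_null_comparison[OF ev])
      then show ?thesis by (rule LIM_zero_cancel)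
    qed
    have PiSm: "Pi_proj P w bs \<mu>0 r0 v = bcoord w v m *\<^sub>R w m" for v
      using mI' unfolding PiS Sm bproj_def by simp
    have wmV: "w m \<in> range (Pi_proj P w bs \<mu>0 r0)"
    proof -
      have "Pi_proj P w bs \<mu>0 r0 (w m) = w m" unfolding PiSm bcoord_basis[OF rjb mI'] by simp
      then show ?thesis by (metis rangeI)
    qed
    have nwpos: "nrm (w m) > 0"
      using nrmV wmV w_nonzero[OF rjb mI'] unfolding norm_on_def by (metis less_eq_real_def)
    have qform: "q j = \<bar>c j m\<bar> * nrm (w m)" for j
      using nrmV wmV unfolding q_def PiSm c_def norm_on_def by blast
    have Hv0: "H v0 > 0" using Hpos[OF v0nz] .
    have evk: "\<forall>k\<in>{1..<N}. eventually (\<lambda>n. H (axis (\<sigma> k) 1 v* matpow P n - \<pi>) < H (axis (\<sigma> (Suc k)) 1 v* matpow P n - \<pi>)) sequentially"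
    proof
      fix k assume k: "k \<in> {1..<N}"
      have "q (\<sigma> k) < q (\<sigma> (Suc k))" using qmono k by blast
      then have "\<bar>c (\<sigma> k) m\<bar> < \<bar>c (\<sigma> (Suc k)) m\<bar>" using nwpos by (simp add: qform)
      then have lt: "Lj (\<sigma> k) < Lj (\<sigma> (Suc k))" using Hv0 by (simp add: Lj_def)
      have "((\<lambda>n. H (axis (\<sigma> (Suc k)) 1 v* matpow P n - \<pi>) / g n - H (axis (\<sigma> k) 1 v* matpow P n - \<pi>) / g n)
              \<longlonglongrightarrow> Lj (\<sigma> (Suc k)) - Lj (\<sigma> k))"
        by (intro tendsto_diff Flim)
      from order_tendstoD(1)[OF this, of 0] lt
      have "eventually (\<lambda>n. 0 < H (axis (\<sigma> (Suc k)) 1 v* matpow P n - \<pi>) / g n - H (axis (\<sigma> k) 1 v* matpow P n - \<pi>) / g n) sequentially"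
        by simp
      then show "eventually (\<lambda>n. H (axis (\<sigma> k) 1 v* matpow P n - \<pi>) < H (axis (\<sigma> (Suc k)) 1 v* matpow P n - \<pi>)) sequentially"
        using gpos
      proof eventually_elim
        case (elim n)
        then show ?case by (simp add: field_simps)
      qed
    qed
    have "eventually (\<lambda>n. \<forall>k\<in>{1..<N}. H (axis (\<sigma> k) 1 v* matpow P n - \<pi>) < H (axis (\<sigma> (Suc k)) 1 v* matpow P n - \<pi>)) sequentially"
      by (rule eventually_ball_finite[OF fin1 evk])
    then obtain n1 where "\<forall>n\<ge>n1. \<forall>k\<in>{1..<N}. H (axis (\<sigma> k) 1 v* matpow P n - \<pi>) < H (axis (\<sigma> (Suc k)) 1 v* matpow P n - \<pi>)"
      unfolding eventually_sequentially by blast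
    then show ?thesis by (intro exI[of _ n1]) auto
  qed
qed

end
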